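(* Let $\delta$ be the differential defined in the context. Then: (1) $\ker(\delta:\mathfrak{lie}_1\to\mathfrak{lie}_2)=\mathfrak{lie}_1$; (2) $\ker(\delta:\mathfrak{tr}_1\to\mathfrak{tr}_2)=k\,\mathrm{Tr}(x)$; (3) $\ker(\delta:\mathfrak{lie}_2\to\mathfrak{lie}_3)/\mathrm{im}(\delta:\mathfrak{lie}_1\to\mathfrak{lie}_2)$ is one-dimensional, spanned by the class of $[x,y]$; (4) $\ker(\delta:\mathfrak{tr}_2\to\mathfrak{tr}_3)=\mathrm{im}(\delta:\mathfrak{tr}_1\to\mathfrak{tr}_2)$.
   Context: Let $k$ be a field of characteristic zero. For $n\ge 1$, $\mathfrak{lie}_n$ is the degree completion of the free Lie algebra over $k$ on generators $x_1,\dots,x_n$ (graded by word length), and $\mathrm{Ass}_n$ is the degree completion of the free associative algebra on $x_1,\dots,x_n$; for small $n$ the generators are written $x,y,z,w$. Let $\mathrm{Ass}_n^+$ be its part of positive degree and $\mathfrak{tr}_n=\mathrm{Ass}_n^+/\langle ab-ba : a,b\in\mathrm{Ass}_n\rangle$ (quotient by the closed span of commutators), a graded vector space; $\mathrm{Tr}:\mathrm{Ass}_n\to\mathfrak{tr}_n$ denotes the projection (killing constants). For an element $f(x_1,\dots,x_n)$ of $\mathfrak{lie}_n$ or $\mathfrak{tr}_n$, expressions such as $f(x_1,\dots,x_i+x_{i+1},\dots,x_{n+1})$ denote the image under the continuous algebra homomorphism substituting the indicated elements for the generators. The differential $\delta:\mathfrak{lie}_n\to\mathfrak{lie}_{n+1}$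 (and likewise $\delta:\mathfrak{tr}_n\to\mathfrak{tr}_{n+1}$) is $(\delta f)(x_1,\dots,x_{n+1})=f(x_2,\dots,x_{n+1})+\sum_{i=1}^n(-1)^i f(x_1,\dots,x_i+x_{i+1},\dots,x_{n+1})+(-1)^{n+1}f(x_1,\dots,x_n)$. *)

theory Defs
  imports Main
begin

text \<open>Formal noncommutative power series over a coefficient field 'k in letters
  0,1,2,... (letter i stands for the generator x_(i+1)).  A series is a function
  from words (lists of letters) to coefficients; the degree completion allows
  arbitrary (infinite) support.\<close>

type_synonym 'k ser = "nat list \<Rightarrow> 'k"

definition ass :: "nat \<Rightarrow> 'k::field ser \<Rightarrow> bool" where
  "ass n f \<longleftrightarrow> (\<forall>w. \<not> set w \<subseteq> {..<n} \<longrightarrow> f w = 0)"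

definition ass_pos :: "nat \<Rightarrow> 'k::field ser \<Rightarrow> bool" where
  "ass_pos n f \<longleftrightarrow> ass n f \<and> f [] = 0"

definition szero :: "'k::field ser" where "szero = (\<lambda>w. 0)"
definition sadd :: "'k::field ser \<Rightarrow> 'k ser \<Rightarrow> 'k ser" where
  "sadd f g = (\<lambda>w. f w + g w)"
definition ssub :: "'k::field ser \<Rightarrow> 'k ser \<Rightarrow> 'k ser" where
  "ssub f g = (\<lambda>w. f w - g w)"
definition ssmult :: "'k::field \<Rightarrow> 'k ser \<Rightarrow> 'k ser" where
  "ssmult c f = (\<lambda>w. c * f w)"

definition smul :: "'k::field ser \<Rightarrow> 'k ser \<Rightarrow> 'k ser" where
  "smul f g = (\<lambda>w. \<Sum>i\<le>length w. f (take i w) * g (drop i w))"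

definition sbracket :: "'k::field ser \<Rightarrow> 'k ser \<Rightarrow> 'k ser" where
  "sbracket f g = ssub (smul f g) (smul g f)"

definition gen :: "nat \<Rightarrow> 'k::field ser" where
  "gen i = (\<lambda>w. if w = [i] then 1 else 0)"

definition hom :: "nat \<Rightarrow> 'k::field ser \<Rightarrow> 'k ser" where
  "hom d f = (\<lambda>w. if length w = d then f w else 0)"

text \<open>Lie polynomials in n generators: the Lie subalgebra of the free associative
  algebra generated by the generators (the free Lie algebra, embedded in the free
  associative algebra).\<close>
inductive_set lie_poly :: "nat \<Rightarrow> 'k::field ser set" for n where
  lp_gen: "i < n \<Longrightarrow> gen i \<in> lie_poly n"
| lp_zero: "szero \<in> lie_poly n"
| lp_add: "f \<in> lie_poly n \<Longrightarrow> g \<in> lie_poly n \<Longrightarrow> sadd f g \<in> lie_poly n"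
| lp_smult: "f \<in> lie_poly n \<Longrightarrow> ssmult c f \<in> lie_poly n"
| lp_bracket: "f \<in> lie_poly n \<Longrightarrow> g \<in> lie_poly n \<Longrightarrow> sbracket f g \<in> lie_poly n"

definition lie :: "nat \<Rightarrow> 'k::field ser \<Rightarrow> bool" where
  "lie n f \<longleftrightarrow> ass n f \<and> (\<forall>d. hom d f \<in> lie_poly n)"

inductive_set comm_span :: "nat \<Rightarrow> 'k::field ser set" for n where
  cs_comm: "ass n a \<Longrightarrow> ass n b \<Longrightarrow> sbracket a b \<in> comm_span n"
| cs_zero: "szero \<in> comm_span n"
| cs_add: "f \<in> comm_span n \<Longrightarrow> g \<in> comm_span n \<Longrightarrow> sadd f g \<in> comm_span n"
| cs_smult: "f \<in> comm_span n \<Longrightarrow> ssmult c f \<in> comm_span n"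

text \<open>Closure of the commutator span in the degree-completion topology.
  tr_n = Ass_n^+ / comm_closed n, so Tr(f) = Tr(g) for f, g in Ass_n^+
  iff f - g is in comm_closed n.\<close>
definition comm_closed :: "nat \<Rightarrow> 'k::field ser \<Rightarrow> bool" where
  "comm_closed n f \<longleftrightarrow> ass n f \<and>
     (\<forall>N. \<exists>s\<in>comm_span n. \<forall>w. length w < N \<longrightarrow> f w = s w)"

text \<open>Continuous algebra homomorphism Ass_n -> Ass_m determined by a linear
  substitution: letter j is sent to sum_l (sig j l) x_l.\<close>
definition subst :: "nat \<Rightarrow> (nat \<Rightarrow> nat \<Rightarrow> 'k::field) \<Rightarrow> 'k ser \<Rightarrow> 'k ser" where
  "subst n sig f = (\<lambda>w. \<Sum>u\<in>{u. length u = length w \<and> set u \<subseteq> {..<n}}.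
       f u * (\<Prod>t<length w. sig (u ! t) (w ! t)))"

text \<open>f(x_2,...,x_{n+1})\<close>
definition sig_first :: "nat \<Rightarrow> nat \<Rightarrow> 'k::field" where
  "sig_first j l = (if l = j + 1 then 1 else 0)"

text \<open>f(x_1,...,x_i + x_{i+1},...,x_{n+1}) for 1 <= i <= n (1-indexed i).\<close>
definition sig_mid :: "nat \<Rightarrow> nat \<Rightarrow> nat \<Rightarrow> 'k::field" where
  "sig_mid i j l =
     (if j + 1 < i then (if l = j then 1 else 0)
      else if j + 1 = i then (if l = j \<or> l = j + 1 then 1 else 0)
      else (if l = j + 1 then 1 else 0))"

text \<open>f(x_1,...,x_n)\<close>
definition sig_last :: "nat \<Rightarrow> nat \<Rightarrow> 'k::field" where
  "sig_last j l = (if l = j then 1 else 0)"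

definition delta :: "nat \<Rightarrow> 'k::field ser \<Rightarrow> 'k ser" where
  "delta n f = (\<lambda>w. subst n sig_first f w
      + (\<Sum>i=1..n. (-1) ^ i * subst n (sig_mid i) f w)
      + (-1) ^ (n + 1) * subst n sig_last f w)"

end

theory Submission
  imports Defs
begin

lemma prod_indicator:
  "(\<Prod>t<(m::nat). (if P t then 1 else 0::'a::comm_semiring_1)) = (if \<forall>t<m. P t then 1 else 0)"
  by (induct m) (auto simp: less_Suc_eq)

lemma subst_letter:
  fixes sig :: "nat \<Rightarrow> nat \<Rightarrow> 'k::field"
  assumes S: "\<forall>j<n. \<forall>l. sig j l = (if j = p l \<and> q l then 1 else 0)"
    and P: "\<forall>l. q l \<longrightarrow> p l < n"
  shows "subst n sig f w = (if \<forall>l\<in>set w. q l then f (map p w) else 0)"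
proof -
  let ?U = "{u. length u = length w \<and> set u \<subseteq> {..<n}}"
  have fin: "finite ?U"
    using finite_lists_length_eq[of "{..<n}" "length w"] by (simp add: conj_commute)
  have "subst n sig f w = (\<Sum>u\<in>?U. if u = map p w then (if \<forall>l\<in>set w. q l then f u else 0) else 0)"
    unfolding subst_def
  proof (rule sum.cong[OF refl])
    fix u assume u: "u \<in> ?U"
    have "(\<Prod>t<length w. sig (u ! t) (w ! t)) =
          (\<Prod>t<length w. if u ! t = p (w ! t) \<and> q (w ! t) then 1 else 0)"
    proof (rule prod.cong[OF refl])
      fix t assume "t \<in> {..<length w}"
      then have "u ! t < n" using u by (auto simp: subset_iff)
      then show "sig (u ! t) (w ! t) = (if u ! t = p (w ! t) \<and> q (w ! t) then 1 else 0)"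
        using S by blast
    qed
    also have "\<dots> = (if \<forall>t<length w. u ! t = p (w ! t) \<and> q (w ! t) then 1 else 0)"
      by (rule prod_indicator)
    also have "(\<forall>t<length w. u ! t = p (w ! t) \<and> q (w ! t)) \<longleftrightarrow> u = map p w \<and> (\<forall>l\<in>set w. q l)"
      using u by (auto simp: list_eq_iff_nth_eq in_set_conv_nth) (metis nth_mem)
    finally show "f u * (\<Prod>t<length w. sig (u ! t) (w ! t)) =
        (if u = map p w then (if \<forall>l\<in>set w. q l then f u else 0) else 0)" by auto
  qed
  also have "\<dots> = (if map p w \<in> ?U then (if \<forall>l\<in>set w. q l then f (map p w) else 0) else 0)"
    by (rule sum.delta[OF fin])
  also have "\<dots> = (if \<forall>l\<in>set w. q l then f (map p w) else 0)"
    using P by auto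
  finally show ?thesis .
qed

lemma delta_formula:
  "delta n f w = (if \<forall>l\<in>set w. 1 \<le> l \<and> l \<le> n then f (map (\<lambda>l. l - 1) w) else 0)
     + (\<Sum>i=1..n. (-1) ^ i * (if \<forall>l\<in>set w. l \<le> n then f (map (\<lambda>l. if l < i then l else l - 1) w) else 0))
     + (-1) ^ (n + 1) * (if \<forall>l\<in>set w. l < n then f w else 0)"
proof -
  have 1: "subst n sig_first f w = (if \<forall>l\<in>set w. 1 \<le> l \<and> l \<le> n then f (map (\<lambda>l. l - 1) w) else 0)"
    by (rule subst_letter) (auto simp: sig_first_def)
  have 2: "subst n (sig_mid i) f w = (if \<forall>l\<in>set w. l \<le> n then f (map (\<lambda>l. if l < i then l else l - 1) w) else 0)"
    if "i \<in> {1..n}" for i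
    using that by (intro subst_letter) (auto simp: sig_mid_def)
  have 3: "subst n sig_last f w = (if \<forall>l\<in>set w. l < n then f w else 0)"
    using subst_letter[of n sig_last "\<lambda>l. l" "\<lambda>l. l < n" f w] by (auto simp: sig_last_def)
  show ?thesis unfolding delta_def using 1 2 3 by simp
qed

definition cs :: "'k::field ser \<Rightarrow> nat list \<Rightarrow> 'k" where
  "cs f w = (\<Sum>i<length w. f (rotate i w))"

definition word :: "nat list \<Rightarrow> 'k::field ser" where
  "word a = (\<lambda>v. if v = a then 1 else 0)"

lemma rot_sum:
  fixes g :: "nat \<Rightarrow> 'a::comm_monoid_add"
  assumes "0 < d"
  shows "(\<Sum>i<d. g ((i + t) mod d)) = (\<Sum>i<d. g i)"
proof (induct t arbitrary: g)
  case 0 then show ?case using assms by (intro sum.cong) auto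
next
  case (Suc t)
  obtain m where d: "d = Suc m" using assms by (cases d) auto
  let ?h = "\<lambda>i. g ((i + t) mod d)"
  have "(\<Sum>i<d. g ((i + Suc t) mod d)) = (\<Sum>i<d. ?h ((i + 1) mod d))"
  proof (rule sum.cong[OF refl])
    fix i
    have "((i + 1) mod d + t) mod d = (i + 1 + t) mod d" by (rule mod_add_left_eq)
    also have "i + 1 + t = i + Suc t" by simp
    finally show "g ((i + Suc t) mod d) = ?h ((i + 1) mod d)" by simp
  qed
  also have "\<dots> = (\<Sum>i<d. ?h i)"
  proof -
    have "(\<Sum>i<Suc m. ?h ((i + 1) mod Suc m)) = (\<Sum>i<m. ?h ((i + 1) mod Suc m)) + ?h ((m+1) mod Suc m)"
      by (rule sum.lessThan_Suc)
    also have "?h ((m+1) mod Suc m) = ?h 0" by simp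
    also have "(\<Sum>i<m. ?h ((i + 1) mod Suc m)) = (\<Sum>i<m. ?h (Suc i))"
      by (rule sum.cong) auto
    also have "(\<Sum>i<m. ?h (Suc i)) + ?h 0 = (\<Sum>i<Suc m. ?h i)"
      unfolding sum.lessThan_Suc_shift by (rule add.commute)
    finally show ?thesis using d by simp
  qed
  also have "\<dots> = (\<Sum>i<d. g i)" by (rule Suc)
  finally show ?case .
qed

lemma cs_rotate: "cs f (rotate t v) = cs f v"
proof (cases "length v = 0")
  case True then show ?thesis by (simp add: cs_def)
next
  case False
  let ?d = "length v"
  have "cs f (rotate t v) = (\<Sum>i<?d. f (rotate ((i + t) mod ?d) v))"
    unfolding cs_def by (auto intro!: sum.cong simp: rotate_rotate rotate_conv_mod[symmetric])
  also have "\<dots> = cs f v" unfolding cs_def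
    using rot_sum[of ?d "\<lambda>i. f (rotate i v)" t] False by simp
  finally show ?thesis .
qed

lemma rot_take_drop:
  assumes "length r = d" "j \<le> d"
  shows "take (d - j) (rotate j r) = drop j r \<and> drop (d - j) (rotate j r) = take j r"
proof (cases "j = d")
  case True then show ?thesis using assms by simp
next
  case False
  then have "j < d" using assms by simp
  then have "rotate j r = drop j r @ take j r" using assms by (simp add: rotate_drop_take)
  then show ?thesis using assms \<open>j < d\<close> by simp
qed

lemma cs_smul_comm: "cs (smul a b) w = cs (smul b a) w"
proof (cases "length w = 0")
  case True then show ?thesis by (simp add: cs_def)
next
  case False
  let ?d = "length w"
  let ?F = "\<lambda>i j. a (take j (rotate i w)) * b (drop j (rotate i w))"
  let ?G = "\<lambda>i j. b (take j (rotate i w)) * a (drop j (rotate i w))"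
  have "cs (smul a b) w = (\<Sum>i<?d. \<Sum>j\<le>?d. ?F i j)" by (simp add: cs_def smul_def)
  also have "\<dots> = (\<Sum>j\<le>?d. \<Sum>i<?d. ?F i j)" by (rule sum.swap)
  also have "\<dots> = (\<Sum>j\<le>?d. \<Sum>i<?d. ?G i (?d - j))"
  proof (rule sum.cong[OF refl])
    fix j assume j: "j \<in> {..?d}"
    have "(\<Sum>i<?d. ?G i (?d - j)) = (\<Sum>i<?d. ?G ((i + j) mod ?d) (?d - j))"
      using rot_sum[of ?d "\<lambda>i. ?G i (?d - j)" j] False by simp
    also have "\<dots> = (\<Sum>i<?d. ?F i j)"
    proof (rule sum.cong[OF refl])
      fix i assume "i \<in> {..<?d}"
      have r: "rotate ((i + j) mod ?d) w = rotate j (rotate i w)"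
        by (simp add: rotate_rotate rotate_conv_mod[symmetric] add.commute)
      have "length (rotate i w) = ?d" by simp
      from rot_take_drop[OF this, of j] j
      show "?G ((i + j) mod ?d) (?d - j) = ?F i j" unfolding r by (simp add: mult.commute)
    qed
    finally show "(\<Sum>i<?d. ?F i j) = (\<Sum>i<?d. ?G i (?d - j))" by simp
  qed
  also have "\<dots> = (\<Sum>j\<le>?d. \<Sum>i<?d. ?G i j)"
    by (rule sum.reindex_bij_witness[where i="\<lambda>j. ?d - j" and j="\<lambda>j. ?d - j"]) auto
  also have "\<dots> = (\<Sum>i<?d. \<Sum>j\<le>?d. ?G i j)" by (rule sum.swap)
  also have "\<dots> = cs (smul b a) w" by (simp add: cs_def smul_def)
  finally show ?thesis .
qed

lemma cs_sadd: "cs (sadd f g) w = cs f w + cs g w"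
  by (simp add: cs_def sadd_def sum.distrib)
lemma cs_ssub: "cs (ssub f g) w = cs f w - cs g w"
  by (simp add: cs_def ssub_def sum_subtractf)
lemma cs_ssmult: "cs (ssmult c f) w = c * cs f w"
  by (simp add: cs_def ssmult_def sum_distrib_left)
lemma cs_szero: "cs szero w = 0"
  by (simp add: cs_def szero_def)
lemma cs_sbracket: "cs (sbracket a b) w = 0"
  by (simp add: sbracket_def cs_ssub cs_smul_comm)

lemma comm_span_cs: "s \<in> comm_span n \<Longrightarrow> cs s w = 0"
  by (induct rule: comm_span.induct) (auto simp: cs_sbracket cs_szero cs_sadd cs_ssmult)

lemma smul_nil: "smul a b [] = a [] * b []"
  by (simp add: smul_def)

lemma comm_span_nil: "s \<in> comm_span n \<Longrightarrow> s [] = 0"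
  by (induct rule: comm_span.induct) (auto simp: sbracket_def ssub_def smul_nil szero_def sadd_def ssmult_def)

lemma lie_poly_nil: "f \<in> lie_poly n \<Longrightarrow> f [] = 0"
  by (induct rule: lie_poly.induct) (auto simp: gen_def sbracket_def ssub_def smul_nil szero_def sadd_def ssmult_def)

lemma cs_gen: "length w \<noteq> 1 \<Longrightarrow> cs (gen i) w = 0"
proof -
  assume l: "length w \<noteq> 1"
  have "rotate j w \<noteq> [i]" for j
  proof
    assume "rotate j w = [i]"
    then have "length (rotate j w) = 1" by simp
    then show False using l by simp
  qed
  then show ?thesis by (auto simp: cs_def gen_def intro!: sum.neutral)
qed

lemma lie_poly_cs: "f \<in> lie_poly n \<Longrightarrow> length w \<noteq> 1 \<Longrightarrow> cs f w = 0"
  by (induct rule: lie_poly.induct) (auto simp: cs_sbracket cs_szero cs_sadd cs_ssmult cs_gen)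

lemma lie_cs: "lie n f \<Longrightarrow> length w \<noteq> 1 \<Longrightarrow> cs f w = 0"
proof -
  assume "lie n f" "length w \<noteq> 1"
  then have "cs (hom (length w) f) w = 0" by (intro lie_poly_cs) (auto simp: lie_def)
  moreover have "cs (hom (length w) f) w = cs f w" by (simp add: cs_def hom_def)
  ultimately show ?thesis by simp
qed

lemma lie_nil: "lie n f \<Longrightarrow> f [] = 0"
proof -
  assume "lie n f"
  then have "hom 0 f [] = 0" by (intro lie_poly_nil) (auto simp: lie_def)
  then show ?thesis by (simp add: hom_def)
qed

lemma comm_closed_cs: "comm_closed n h \<Longrightarrow> cs h w = 0 \<and> h [] = 0"
proof -
  assume "comm_closed n h"
  then obtain s where s: "s \<in> comm_span n" "\<forall>v. length v < Suc (length w) \<longrightarrow> h v = s v"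
    unfolding comm_closed_def by blast
  have "cs h w = cs s w" unfolding cs_def using s(2) by (intro sum.cong) auto
  then show ?thesis using comm_span_cs[OF s(1)] comm_span_nil[OF s(1)] s(2) by auto
qed

lemma take_drop_eq:
  assumes k: "k \<le> length v"
  shows "(take k v = a \<and> drop k v = b) \<longleftrightarrow> (k = length a \<and> v = a @ b)"
proof
  assume h: "take k v = a \<and> drop k v = b"
  then have "length a = k" using k by auto
  moreover have "v = a @ b" using h by (metis append_take_drop_id)
  ultimately show "k = length a \<and> v = a @ b" by simp
next
  assume "k = length a \<and> v = a @ b" then show "take k v = a \<and> drop k v = b" by simp
qed

lemma smul_word: "smul (word a) (word b) = (word (a @ b) :: 'k::field ser)"
proof
  fix v
  have "smul (word a) (word b) v = (\<Sum>k\<le>length v. if k = length a then (if v = a @ b then 1 else 0) else (0::'k))"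
    unfolding smul_def word_def
  proof (rule sum.cong[OF refl])
    fix k assume k: "k \<in> {..length v}"
    then have eq: "(take k v = a \<and> drop k v = b) \<longleftrightarrow> (k = length a \<and> v = a @ b)"
      by (intro take_drop_eq) auto
    show "(if take k v = a then 1 else 0) * (if drop k v = b then 1 else 0) =
      (if k = length a then if v = a @ b then 1 else 0 else (0::'k))"
    proof -
      have "(if take k v = a then 1 else 0) * (if drop k v = b then 1 else 0) =
        (if take k v = a \<and> drop k v = b then 1 else (0::'k))" by simp
      then show ?thesis unfolding eq by simp
    qed
  qed
  also have "\<dots> = word (a @ b) v"
    by (simp add: sum.delta word_def)
  finally show "smul (word a) (word b) v = (word (a @ b) v :: 'k)" .
qed

lemma gen_word: "gen i = word [i]" by (simp add: gen_def word_def)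

lemma comm_span_sum:
  "finite A \<Longrightarrow> (\<forall>x\<in>A. F x \<in> comm_span n) \<Longrightarrow> (\<lambda>v. \<Sum>x\<in>A. F x v) \<in> comm_span n"
proof (induct rule: finite_induct)
  case empty
  have "(\<lambda>v. \<Sum>x\<in>{}. F x v) = szero" by (simp add: szero_def)
  then show ?case using comm_span.cs_zero by simp
next
  case (insert a A)
  have "(\<lambda>v. \<Sum>x\<in>insert a A. F x v) = sadd (F a) (\<lambda>v. \<Sum>x\<in>A. F x v)"
    using insert by (simp add: sadd_def)
  then show ?case using insert by (auto intro: comm_span.cs_add)
qed

lemma ass_word: "set a \<subseteq> {..<n} \<Longrightarrow> ass n (word a)"
  by (auto simp: ass_def word_def)

lemma rotate_le: "k \<le> length w \<Longrightarrow> rotate k w = drop k w @ take k w"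
proof (cases "k = length w")
  case True then show ?thesis by (simp add: rotate_id)
next
  case False
  assume "k \<le> length w" then have "k < length w" using False by simp
  then show ?thesis by (simp add: rotate_drop_take)
qed

lemma rot_inv:
  assumes "length w = length v" "i < length v"
  shows "(v = rotate (length w - i) w) \<longleftrightarrow> (w = rotate i v)"
proof
  assume v: "v = rotate (length w - i) w"
  have "rotate i v = rotate (i + (length w - i)) w" unfolding v by (rule rotate_rotate)
  also have "i + (length w - i) = length w" using assms by simp
  finally show "w = rotate i v" by (simp add: rotate_id)
next
  assume w: "w = rotate i v"
  have "rotate (length w - i) w = rotate ((length w - i) + i) v" unfolding w by (rule rotate_rotate)
  also have "(length w - i) + i = length v" using assms by simp
  finally show "v = rotate (length w - i) w" by (simp add: rotate_id)
qed

lemma cs_criterion: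
  fixes h :: "'k::field_char_0 ser"
  assumes A: "ass n h" and H0: "h [] = 0" and C: "\<forall>w. cs h w = 0"
  shows "comm_closed n h"
  unfolding comm_closed_def
proof (intro conjI allI A)
  fix N
  define W where "W = {w. set w \<subseteq> {..<n} \<and> length w \<le> N \<and> w \<noteq> []}"
  have finW: "finite W"
    by (rule finite_subset[OF _ finite_lists_length_le[of "{..<n}" N]]) (auto simp: W_def)
  define c where "c w = h w / of_nat (length w)" for w
  define T where "T w i = ssmult (c w) (sbracket (word (take (length w - i) w)) (word (drop (length w - i) w)))" for w i
  define s where "s = (\<lambda>v. \<Sum>w\<in>W. (\<lambda>v. \<Sum>i<length w. T w i v) v)"
  have Tin: "T w i \<in> comm_span n" if "w \<in> W" for w i
  proof -
    have "set (take (length w - i) w) \<subseteq> {..<n}" "set (drop (length w - i) w) \<subseteq> {..<n}"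
      using that unfolding W_def by (auto dest: in_set_takeD in_set_dropD)
    then show ?thesis unfolding T_def
      by (intro comm_span.cs_smult comm_span.cs_comm ass_word)
  qed
  have sin: "s \<in> comm_span n" unfolding s_def
  proof (rule comm_span_sum[of W "\<lambda>w v. \<Sum>i<length w. T w i v", OF finW, simplified], intro ballI)
    fix w assume w: "w \<in> W"
    show "(\<lambda>v. \<Sum>i<length w. T w i v) \<in> comm_span n"
      using comm_span_sum[of "{..<length w}" "T w" n] Tin[OF w] by simp
  qed
  have Tval: "T w i v = c w * ((if v = w then 1 else 0) - (if v = rotate (length w - i) w then 1 else 0))"
    if "i < length w" for w i v
  proof -
    have r: "rotate (length w - i) w = drop (length w - i) w @ take (length w - i) w"
      by (rule rotate_le) simp
    show ?thesis unfolding T_def ssmult_def sbracket_def ssub_def smul_word r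
      by (simp add: word_def)
  qed
  have sval: "s v = (if v \<in> W then h v else 0)" for v
  proof -
    have "s v = (\<Sum>w\<in>W. \<Sum>i<length w. c w * (if v = w then 1 else 0))
               - (\<Sum>w\<in>W. \<Sum>i<length w. c w * (if v = rotate (length w - i) w then 1 else 0))"
      unfolding s_def by (simp add: Tval right_diff_distrib sum_subtractf)
    also have "(\<Sum>w\<in>W. \<Sum>i<length w. c w * (if v = w then 1 else 0)) = (\<Sum>w\<in>W. if v = w then h w else 0)"
    proof (rule sum.cong[OF refl])
      fix w assume "w \<in> W"
      then have "length w \<noteq> 0" by (auto simp: W_def)
      then show "(\<Sum>i<length w. c w * (if v = w then 1 else 0)) = (if v = w then h w else 0)"
        by (simp add: c_def)
    qed
    also have "\<dots> = (if v \<in> W then h v else 0)" by (simp add: sum.delta' finW)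
    also have "(\<Sum>w\<in>W. \<Sum>i<length w. c w * (if v = rotate (length w - i) w then 1 else 0))
       = (\<Sum>w\<in>W. \<Sum>i<length v. if w = rotate i v then c (rotate i v) else 0)"
    proof (rule sum.cong[OF refl])
      fix w assume "w \<in> W"
      show "(\<Sum>i<length w. c w * (if v = rotate (length w - i) w then 1 else 0))
          = (\<Sum>i<length v. if w = rotate i v then c (rotate i v) else 0)"
      proof (cases "length w = length v")
        case True
        then show ?thesis using rot_inv[OF True] by (intro sum.cong) auto
      next
        case False
        have "v \<noteq> rotate k w" for k using False by (metis length_rotate)
        moreover have "w \<noteq> rotate k v" for k using False by (metis length_rotate)
        ultimately show ?thesis by simp
      qed
    qed
    also have "\<dots> = (\<Sum>i<length v. \<Sum>w\<in>W. if w = rotate i v then c (rotate i v) else 0)"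
      by (rule sum.swap)
    also have "\<dots> = (\<Sum>i<length v. if v \<in> W then h (rotate i v) / of_nat (length v) else 0)"
    proof (rule sum.cong[OF refl])
      fix i
      have "rotate i v \<in> W \<longleftrightarrow> v \<in> W" by (simp add: W_def)
      then show "(\<Sum>w\<in>W. if w = rotate i v then c (rotate i v) else 0) =
          (if v \<in> W then h (rotate i v) / of_nat (length v) else 0)"
        by (simp add: sum.delta finW c_def)
    qed
    also have "\<dots> = (if v \<in> W then cs h v / of_nat (length v) else 0)"
      by (simp add: cs_def sum_divide_distrib)
    also have "\<dots> = 0" using C by simp
    finally show ?thesis by simp
  qed
  show "\<exists>s\<in>comm_span n. \<forall>w. length w < N \<longrightarrow> h w = s w"
  proof (intro bexI[OF _ sin] allI impI)
    fix v :: "nat list" assume "length v < N"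
    show "h v = s v"
    proof (cases "v \<in> W")
      case True then show ?thesis by (simp add: sval)
    next
      case False
      then have "v = [] \<or> \<not> set v \<subseteq> {..<n}" using \<open>length v < N\<close> by (auto simp: W_def)
      then have "h v = 0" using H0 A by (auto simp: ass_def)
      then show ?thesis using False by (simp add: sval)
    qed
  qed
qed

definition D :: "nat \<Rightarrow> 'k::field ser \<Rightarrow> 'k ser" where
  "D n f w = (if \<forall>l\<in>set w. 1 \<le> l \<and> l \<le> n then f (map (\<lambda>l. l - 1) w) else 0)
     + (\<Sum>i=1..n. (-1) ^ i * (if \<forall>l\<in>set w. l \<le> n then f (map (\<lambda>l. if l < i then l else l - 1) w) else 0))
     + (-1) ^ (n + 1) * (if \<forall>l\<in>set w. l < n then f w else 0)"

lemma delta_D: "delta n f = D n f"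
  by (rule ext) (simp add: delta_formula D_def)

lemma D1: "D 1 f w = (if \<forall>l\<in>set w. l = 1 then f (map (\<lambda>l. l - 1) w) else 0)
   - (if \<forall>l\<in>set w. l \<le> 1 then f (map (\<lambda>l. if l < 1 then l else l - 1) w) else 0)
   + (if \<forall>l\<in>set w. l = 0 then f w else 0)"
proof -
  have a: "(\<forall>l\<in>set w. 1 \<le> l \<and> l \<le> 1) = (\<forall>l\<in>set w. l = (1::nat))" by auto
  have b: "(\<forall>l\<in>set w. l < 1) = (\<forall>l\<in>set w. l = (0::nat))" by auto
  have c: "{1..1::nat} = {1}" by auto
  show ?thesis unfolding D_def a b c by simp
qed

lemma D2: "D 2 f w = (if \<forall>l\<in>set w. 1 \<le> l \<and> l \<le> 2 then f (map (\<lambda>l. l - 1) w) else 0)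
   - (if \<forall>l\<in>set w. l \<le> 2 then f (map (\<lambda>l. if l < 1 then l else l - 1) w) else 0)
   + (if \<forall>l\<in>set w. l \<le> 2 then f (map (\<lambda>l. if l < 2 then l else l - 1) w) else 0)
   - (if \<forall>l\<in>set w. l < 2 then f w else 0)"
proof -
  have "{1..2::nat} = {1,2}" by auto
  then show ?thesis unfolding D_def by simp
qed

lemma sum_if_const: "(\<Sum>i\<in>A. if c then g i else 0) = (if c then \<Sum>i\<in>A. g i else 0)"
  by (cases c) simp_all

lemma cs_if_map:
  "cs (\<lambda>v. if \<forall>l\<in>set v. P l then f (map p v) else 0) w = (if \<forall>l\<in>set w. P l then cs f (map p w) else 0)"
  by (cases "\<forall>l\<in>set w. P l") (simp_all only: cs_def set_rotate sum_if_const rotate_map length_map if_True if_False sum.neutral_const)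

lemma cs_D: "cs (D n f) w = D n (cs f) w"
proof -
  let ?A = "\<lambda>f v. (if \<forall>l\<in>set v. 1 \<le> l \<and> l \<le> n then f (map (\<lambda>l. l - 1) v) else 0)"
  let ?B = "\<lambda>f i v. (if \<forall>l\<in>set v. l \<le> n then f (map (\<lambda>l. if l < i then l else l - 1) v) else 0)"
  let ?C = "\<lambda>f v. (if \<forall>l\<in>set v. l < n then f v else 0)"
  have DD: "D n g v = ?A g v + (\<Sum>i=1..n. (-1)^i * ?B g i v) + (-1)^(n+1) * ?C g v" for g v
    unfolding D_def by simp
  have s1: "cs (D n f) w = (\<Sum>r<length w. ?A f (rotate r w)) + (\<Sum>r<length w. \<Sum>i=1..n. (-1)^i * ?B f i (rotate r w))
      + (\<Sum>r<length w. (-1)^(n+1) * ?C f (rotate r w))"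
    unfolding cs_def DD by (simp only: sum.distrib)
  have s2: "(\<Sum>r<length w. \<Sum>i=1..n. (-1)^i * ?B f i (rotate r w)) = (\<Sum>i=1..n. (-1)^i * (\<Sum>r<length w. ?B f i (rotate r w)))"
    by (subst sum.swap) (simp add: sum_distrib_left)
  have s3: "(\<Sum>r<length w. (-1)^(n+1) * ?C f (rotate r w)) = (-1)^(n+1) * (\<Sum>r<length w. ?C f (rotate r w))"
    by (simp add: sum_distrib_left)
  have s4: "(\<Sum>r<length w. ?A f (rotate r w)) = ?A (cs f) w"
    using cs_if_map[of "\<lambda>l. 1 \<le> l \<and> l \<le> n" f "\<lambda>l. l - 1" w] by (simp add: cs_def)
  have eB: "(\<Sum>r<length w. ?B f i (rotate r w)) = ?B (cs f) i w" for i
    using cs_if_map[of "\<lambda>l. l \<le> n" f "\<lambda>l. if l < i then l else l - 1" w] by (simp add: cs_def)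
  have eC: "(\<Sum>r<length w. ?C f (rotate r w)) = ?C (cs f) w"
    by (simp only: cs_def set_rotate sum_if_const)
  show ?thesis unfolding s1 s2 s3 s4 eB eC DD by (rule refl)
qed

lemma K_zero:
  assumes Z: "\<forall>w. D 2 F w = 0" and d: "0 < d"
  shows "F (replicate d 0) = 0" "F (replicate d 1) = 0"
proof -
  have "D 2 F (replicate d 0) = 0" using Z by blast
  then show "F (replicate d 0) = 0" using d by (simp add: D2 map_replicate)
  have "D 2 F (replicate d 2) = 0" using Z by blast
  moreover have "map (\<lambda>l. l - 1) (replicate d (2::nat)) = replicate d 1" by simp
  moreover have "map (\<lambda>l. if l < 1 then l else l - 1) (replicate d (2::nat)) = replicate d 1" by simp
  moreover have "map (\<lambda>l. if l < 2 then l else l - 1) (replicate d (2::nat)) = replicate d 1" by simp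
  ultimately show "F (replicate d 1) = 0" using d by (simp add: D2 del: map_replicate)
qed

lemma K_rel:
  assumes Z: "\<forall>w. D 2 F w = 0"
    and u: "set u \<subseteq> {0,1}" and v: "set v \<subseteq> {0,1}" and len: "length u = length v"
    and le: "\<forall>t<length u. u ! t \<le> v ! t" and u1: "1 \<in> set u" and v0: "0 \<in> set v"
  shows "F u = F v"
proof -
  define w where "w = map (\<lambda>t. u ! t + v ! t) [0..<length u]"
  have lw: "length w = length u" by (simp add: w_def)
  have wn: "w ! t = u ! t + v ! t" if "t < length u" for t using that by (simp add: w_def)
  have u01: "u ! t = 0 \<or> u ! t = 1" if "t < length u" for t using that u nth_mem by fastforce
  have v01: "v ! t = 0 \<or> v ! t = 1" if "t < length u" for t using that v nth_mem len by fastforce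
  obtain t1 where t1: "t1 < length u" "u ! t1 = 1" using u1 by (auto simp: in_set_conv_nth)
  have "v ! t1 = 1" using le t1 v01[OF t1(1)] by fastforce
  then have w2: "2 \<in> set w" using t1 wn lw by (metis in_set_conv_nth one_add_one)
  obtain t0 where t0: "t0 < length u" "v ! t0 = 0" using v0 len by (auto simp: in_set_conv_nth)
  have "u ! t0 = 0" using le t0 by fastforce
  then have w0: "0 \<in> set w" using t0 wn lw by (metis in_set_conv_nth add_0)
  have wle: "\<forall>l\<in>set w. l \<le> 2"
  proof
    fix l assume "l \<in> set w"
    then obtain t where "t < length u" "l = w ! t" using lw by (auto simp: in_set_conv_nth)
    then show "l \<le> 2" using wn u01 v01 by fastforce
  qed
  have m1: "map (\<lambda>l. if l < 1 then l else l - 1) w = u"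
  proof (rule nth_equalityI)
    show "length (map (\<lambda>l. if l < 1 then l else l - 1) w) = length u" using lw by simp
    fix t assume "t < length (map (\<lambda>l. if l < 1 then l else l - 1) w)"
    then have t: "t < length u" using lw by simp
    show "map (\<lambda>l. if l < 1 then l else l - 1) w ! t = u ! t"
      using t wn[OF t] u01[OF t] v01[OF t] le lw by fastforce
  qed
  have m2: "map (\<lambda>l. if l < 2 then l else l - 1) w = v"
  proof (rule nth_equalityI)
    show "length (map (\<lambda>l. if l < 2 then l else l - 1) w) = length v" using lw len by simp
    fix t assume "t < length (map (\<lambda>l. if l < 2 then l else l - 1) w)"
    then have t: "t < length u" using lw by simp
    show "map (\<lambda>l. if l < 2 then l else l - 1) w ! t = v ! t"
      using t wn[OF t] u01[OF t] v01[OF t] le lw by fastforce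
  qed
  have c1: "\<not> (\<forall>l\<in>set w. 1 \<le> l \<and> l \<le> 2)" using w0 by fastforce
  have c2: "\<not> (\<forall>l\<in>set w. l < 2)" using w2 by fastforce
  have "D 2 F w = 0" using Z by blast
  then have "- F u + F v = 0" unfolding D2 m1 m2 if_not_P[OF c1] if_not_P[OF c2] if_P[OF wle] by simp
  then show ?thesis by (simp add: algebra_simps)
qed

definition ev :: "nat \<Rightarrow> nat \<Rightarrow> nat list" where
  "ev d t = (replicate d 0)[t := 1]"

lemma ev_len[simp]: "length (ev d t) = d" by (simp add: ev_def)
lemma ev_nth: "k < d \<Longrightarrow> ev d t ! k = (if k = t then 1 else 0)"
  by (simp add: ev_def nth_list_update)
lemma ev_set: "set (ev d t) \<subseteq> {0,1}"
  unfolding ev_def by (rule order_trans[OF set_update_subset_insert]) auto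
lemma ev_1: "t < d \<Longrightarrow> 1 \<in> set (ev d t)"
  by (metis ev_len ev_nth nth_mem)
lemma ev_0: "t < d \<Longrightarrow> k < d \<Longrightarrow> k \<noteq> t \<Longrightarrow> 0 \<in> set (ev d t)"
  by (metis ev_len ev_nth nth_mem)

lemma ev_le:
  assumes "set u \<subseteq> {0,1}" "t < length u" "u ! t = 1"
  shows "\<forall>k<length (ev (length u) t). ev (length u) t ! k \<le> u ! k"
  using assms by (auto simp: ev_nth)

lemma ev_rotate: "t < d \<Longrightarrow> rotate t (ev d t) = ev d 0"
proof (rule nth_equalityI)
  assume t: "t < d"
  show "length (rotate t (ev d t)) = length (ev d 0)" by simp
  fix k assume "k < length (rotate t (ev d t))"
  then have k: "k < d" by simp
  have "rotate t (ev d t) ! k = ev d t ! ((t + k) mod d)" using k by (simp add: nth_rotate)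
  also have "\<dots> = (if (t + k) mod d = t then 1 else 0)" using k t by (simp add: ev_nth)
  also have "((t + k) mod d = t) \<longleftrightarrow> k = 0"
  proof
    assume h: "(t + k) mod d = t"
    show "k = 0"
    proof (cases "t + k < d")
      case True then show ?thesis using h by simp
    next
      case False
      then have "(t + k) mod d = t + k - d" using k t by (simp add: mod_if)
      then show ?thesis using h k t False by simp
    qed
  qed (use t in simp)
  finally show "rotate t (ev d t) ! k = ev d 0 ! k" using k by (simp add: ev_nth)
qed

lemma rotate_rep: "rotate i (replicate d a) = replicate d a"
proof -
  have "\<forall>y\<in>set (rotate i (replicate d a)). y = a" by simp
  then have "replicate (length (rotate i (replicate d a))) a = rotate i (replicate d a)"
    by (rule replicate_length_same)
  then show ?thesis by simp
qed

lemma cs_rep: "cs f (replicate d a) = of_nat d * f (replicate d a)"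
  by (simp add: cs_def rotate_rep)

lemma map_const_on: "(\<forall>x\<in>set xs. p x = a) \<Longrightarrow> map p xs = replicate (length xs) a"
  by (induct xs) auto

lemma set0_rep: "set w \<subseteq> {0} \<Longrightarrow> w = replicate (length w) (0::nat)"
  by (metis replicate_length_same singletonD subsetD)

lemma set1_rep: "set w \<subseteq> {1} \<Longrightarrow> w = replicate (length w) (1::nat)"
  by (metis replicate_length_same singletonD subsetD)

lemma comm_closed_szero: "comm_closed n (szero :: 'k::field ser)"
  unfolding comm_closed_def by (auto simp: ass_def szero_def intro!: bexI[OF _ comm_span.cs_zero])

lemma delta1_gen:
  assumes "\<forall>w. f w = c * gen 0 w"
  shows "delta 1 f = (szero :: 'k::field ser)"
proof
  fix w
  have fe: "f v = (if v = [0] then c else 0)" for v using assms by (simp add: gen_def)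
  show "delta 1 f w = szero w"
  proof (cases w)
    case Nil then show ?thesis unfolding delta_D D1 by (simp add: fe szero_def)
  next
    case (Cons a r)
    show ?thesis
    proof (cases r)
      case Nil
      then show ?thesis using Cons unfolding delta_D D1 by (cases a) (auto simp: fe szero_def)
    next
      case (Cons b r')
      then show ?thesis using \<open>w = a # r\<close> unfolding delta_D D1 by (simp add: fe szero_def)
    qed
  qed
qed

lemma lie1_form:
  fixes f :: "'k::field_char_0 ser"
  assumes L: "lie 1 f"
  shows "\<forall>w. f w = f [0] * gen 0 w"
proof
  fix w
  show "f w = f [0] * gen 0 w"
  proof (cases "set w \<subseteq> {0}")
    case False
    then have "f w = 0" using L by (auto simp: lie_def ass_def)
    moreover have "w \<noteq> [0]" using False by auto
    ultimately show ?thesis by (simp add: gen_def)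
  next
    case True
    then have w: "w = replicate (length w) 0" by (rule set0_rep)
    show ?thesis
    proof (cases "length w")
      case 0 then show ?thesis using lie_nil[OF L] by (simp add: gen_def)
    next
      case (Suc m)
      show ?thesis
      proof (cases m)
        case 0
        have "w = replicate (Suc 0) 0" using w Suc 0 by metis
        then have "w = [0]" by simp
        then show ?thesis by (simp add: gen_def)
      next
        case (Suc m')
        have "cs f w = 0" using lie_cs[OF L] Suc \<open>length w = Suc m\<close> by simp
        then have "of_nat (length w) * f w = 0" using cs_rep[of f "length w" 0] by (simp add: w[symmetric])
        then have "f w = 0" using \<open>length w = Suc m\<close> by (metis mult_eq_0_iff of_nat_neq_0)
        moreover have "w \<noteq> [0]" using Suc \<open>length w = Suc m\<close> by auto
        ultimately show ?thesis by (simp add: gen_def)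
      qed
    qed
  qed
qed

lemma part1:
  fixes f :: "'k::field_char_0 ser"
  shows "lie 1 f \<Longrightarrow> delta 1 f = szero"
  using lie1_form delta1_gen by blast

lemma part2:
  fixes f :: "'k::field_char_0 ser"
  assumes AP: "ass_pos 1 f"
  shows "comm_closed 2 (delta 1 f) \<longleftrightarrow> (\<exists>c. comm_closed 1 (ssub f (ssmult c (gen 0))))"
proof
  assume CC: "comm_closed 2 (delta 1 f)"
  let ?c = "f [0]"
  have pw: "f w = ?c * gen 0 w" for w
  proof (cases "set w \<subseteq> {0}")
    case False
    then have "f w = 0" using AP by (auto simp: ass_pos_def ass_def)
    moreover have "w \<noteq> [0]" using False by auto
    ultimately show ?thesis by (simp add: gen_def)
  next
    case True
    then have w: "w = replicate (length w) 0" by (rule set0_rep)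
    show ?thesis
    proof (cases "length w")
      case 0 then show ?thesis using AP by (simp add: gen_def ass_pos_def)
    next
      case (Suc m)
      show ?thesis
      proof (cases m)
        case 0
        have "w = replicate (Suc 0) 0" using w Suc 0 by metis
        then have "w = [0]" by simp
        then show ?thesis by (simp add: gen_def)
      next
        case (Suc m')
        let ?d = "length w"
        have "cs (delta 1 f) (ev ?d 0) = 0" using comm_closed_cs[OF CC] by blast
        then have Z: "D 1 (cs f) (ev ?d 0) = 0" by (simp only: delta_D cs_D)
        have dd: "0 < ?d" "1 < ?d" using Suc \<open>length w = Suc m\<close> by auto
        have z: "0 \<in> set (ev ?d 0)" using ev_0[of 0 ?d 1] dd by auto
        have o: "1 \<in> set (ev ?d 0)" using ev_1[of 0 ?d] dd by auto
        have c1: "\<not> (\<forall>l\<in>set (ev ?d 0). l = 1)" using z by (metis zero_neq_one)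
        have c3: "\<not> (\<forall>l\<in>set (ev ?d 0). l = 0)" using o by (metis zero_neq_one)
        have c2: "\<forall>l\<in>set (ev ?d 0). l \<le> 1" using ev_set[of ?d 0] by auto
        have mp: "map (\<lambda>l. if l < 1 then l else l - 1) (ev ?d 0) = replicate ?d 0"
          using map_const_on[of "ev ?d 0" "\<lambda>l. if l < 1 then l else l - 1" 0] c2 by simp
        have "cs f (replicate ?d 0) = 0"
          using Z unfolding D1 if_not_P[OF c1] if_not_P[OF c3] if_P[OF c2] mp by simp
        then have "of_nat ?d * f w = 0" using cs_rep[of f ?d 0] by (simp add: w[symmetric])
        then have "f w = 0" using \<open>length w = Suc m\<close> by (metis mult_eq_0_iff of_nat_neq_0)
        moreover have "w \<noteq> [0]" using Suc \<open>length w = Suc m\<close> by auto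
        ultimately show ?thesis by (simp add: gen_def)
      qed
    qed
  qed
  have "ssub f (ssmult ?c (gen 0)) = szero"
  proof (rule ext)
    fix w
    have "f w = ?c * gen 0 w" by (rule pw)
    then show "ssub f (ssmult ?c (gen 0)) w = szero w" by (simp add: ssub_def ssmult_def szero_def)
  qed
  then show "\<exists>c. comm_closed 1 (ssub f (ssmult c (gen 0)))"
    using comm_closed_szero by metis
next
  assume "\<exists>c. comm_closed 1 (ssub f (ssmult c (gen 0)))"
  then obtain c where CC: "comm_closed 1 (ssub f (ssmult c (gen 0)))" by blast
  let ?h = "ssub f (ssmult c (gen 0))"
  have pw: "f w = c * gen 0 w" for w
  proof (cases "set w \<subseteq> {0}")
    case False
    then have "f w = 0" using AP by (auto simp: ass_pos_def ass_def)
    moreover have "w \<noteq> [0]" using False by auto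
    ultimately show ?thesis by (simp add: gen_def)
  next
    case True
    then have w: "w = replicate (length w) 0" by (rule set0_rep)
    show ?thesis
    proof (cases "length w")
      case 0 then show ?thesis using comm_closed_cs[OF CC] by (simp add: ssub_def ssmult_def)
    next
      case (Suc m)
      have "cs ?h w = 0" using comm_closed_cs[OF CC] by blast
      then have "of_nat (length w) * ?h w = 0" using cs_rep[of ?h "length w" 0] by (simp add: w[symmetric])
      then have "?h w = 0" using Suc by (metis mult_eq_0_iff of_nat_neq_0)
      then show ?thesis by (simp add: ssub_def ssmult_def)
    qed
  qed
  have "delta 1 f = szero" using delta1_gen pw by blast
  then show "comm_closed 2 (delta 1 f)" using comm_closed_szero by metis
qed

abbreviation BB :: "'k::field ser" where "BB \<equiv> sbracket (gen 0) (gen 1)"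

lemma Bf: "(BB :: 'k::field ser) w = (if w = [0,1] then 1 else if w = [1,0] then -1 else 0)"
  unfolding sbracket_def ssub_def gen_word smul_word by (simp add: word_def)

lemma Bf2: "(sbracket (gen 0) (gen (Suc 0)) :: 'k::field ser) w = (if w = [0,Suc 0] then 1 else if w = [Suc 0,0] then -1 else 0)"
  using Bf[of w, unfolded One_nat_def] .

lemma part3a: "lie 2 (BB :: 'k::field ser)"
  unfolding lie_def
proof (intro conjI allI)
  show "ass 2 (BB :: 'k ser)" by (auto simp: ass_def Bf Bf2)
  fix d
  show "hom d (BB :: 'k ser) \<in> lie_poly 2"
  proof (cases "d = 2")
    case True
    have "hom d (BB :: 'k ser) = BB" by (rule ext) (auto simp: hom_def Bf Bf2 True)
    then show ?thesis by (auto intro!: lie_poly.intros)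
  next
    case False
    have "hom d (BB :: 'k ser) = szero" by (rule ext) (use False in \<open>auto simp: hom_def Bf Bf2 szero_def numeral_2_eq_2\<close>)
    then show ?thesis by (auto intro!: lie_poly.intros)
  qed
qed

lemma part3b: "delta 2 (BB :: 'k::field ser) = szero"
proof
  fix w :: "nat list"
  show "delta 2 (BB :: 'k ser) w = szero w"
  proof (cases "length w = 2")
    case False
    have ne: "map q w \<noteq> [0,1] \<and> map q w \<noteq> [1,0]" for q :: "nat \<Rightarrow> nat"
      using False by (metis length_map list.size(3) list.size(4) numeral_2_eq_2 One_nat_def add_Suc_right add_0_right)
    have ne2: "w \<noteq> [0,1] \<and> w \<noteq> [1,0]" using False by auto
    show ?thesis unfolding delta_D D2 Bf using ne ne2 by (simp add: szero_def)
  next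
    case True
    then obtain a b where w: "w = [a,b]"
      by (metis (no_types, lifting) length_0_conv length_Suc_conv numeral_2_eq_2)
    have "a = 0 \<or> a = 1 \<or> a = 2 \<or> a > 2" by arith
    moreover have "b = 0 \<or> b = 1 \<or> b = 2 \<or> b > 2" by arith
    ultimately show ?thesis unfolding w delta_D D2 Bf
      by (elim disjE) (simp_all add: szero_def)
  qed
qed

lemma part3c: "\<not> (\<exists>g::'k::field_char_0 ser. lie 1 g \<and> delta 1 g = BB)"
proof
  assume "\<exists>g::'k ser. lie 1 g \<and> delta 1 g = BB"
  then obtain g :: "'k ser" where "lie 1 g" "delta 1 g = BB" by blast
  then have "BB = (szero :: 'k ser)" using part1 by metis
  then have "(BB :: 'k ser) [0,1] = szero [0,1]" by simp
  then show False by (simp add: Bf Bf2 szero_def)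
qed

definition gv :: "nat \<Rightarrow> nat \<Rightarrow> nat list" where
  "gv d s = (replicate d 1)[s := 0]"

lemma gv_len[simp]: "length (gv d s) = d" by (simp add: gv_def)
lemma gv_nth: "k < d \<Longrightarrow> gv d s ! k = (if k = s then 0 else 1)"
  by (simp add: gv_def nth_list_update)
lemma gv_set: "set (gv d s) \<subseteq> {0,1}"
  unfolding gv_def by (rule order_trans[OF set_update_subset_insert]) auto
lemma gv_0: "s < d \<Longrightarrow> 0 \<in> set (gv d s)"
  by (metis gv_len gv_nth nth_mem)

lemma NC:
  fixes f :: "'k::field ser"
  assumes Z: "\<forall>w. D 2 f w = 0"
    and u: "set u \<subseteq> {0,1}" "0 \<in> set u" "1 \<in> set u" "3 \<le> length u"
  shows "f u = f (ev (length u) 0)"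
proof -
  let ?d = "length u"
  obtain t where t: "t < ?d" "u ! t = 1" using u(3) by (auto simp: in_set_conv_nth)
  have e1: "f (ev ?d t) = f u"
    by (rule K_rel[OF Z ev_set u(1)]) (use t u ev_le[OF u(1) t] ev_1[OF t(1)] in auto)
  define s where "s = (if t = 1 then 2 else (1::nat))"
  have s: "s < ?d" "s \<noteq> t" "s \<noteq> 0" using u(4) by (auto simp: s_def)
  have e2: "f (ev ?d t) = f (gv ?d s)"
    by (rule K_rel[OF Z ev_set gv_set]) (use t s ev_1[OF t(1)] gv_0[OF s(1)] in \<open>auto simp: ev_nth gv_nth\<close>)
  have e3: "f (ev ?d 0) = f (gv ?d s)"
    by (rule K_rel[OF Z ev_set gv_set]) (use t s ev_1[of 0 ?d, OF order.strict_trans[OF _ s(1)]] gv_0[OF s(1)] in \<open>auto simp: ev_nth gv_nth\<close>)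
  show ?thesis using e1 e2 e3 by simp
qed

lemma part3d_pw:
  fixes f :: "'k::field_char_0 ser"
  assumes L: "lie 2 f" and Z0: "delta 2 f = szero"
  shows "f w = f [0,1] * BB w"
proof -
  have Z: "\<forall>w. D 2 f w = 0"
  proof
    fix w
    have "delta 2 f w = szero w" using Z0 by simp
    then show "D 2 f w = 0" by (simp add: delta_D szero_def)
  qed
  show ?thesis
  proof (cases "set w \<subseteq> {0,1}")
    case False
    then have "\<not> set w \<subseteq> {..<2}" by auto
    then have "f w = 0" using L by (auto simp: lie_def ass_def)
    moreover have "w \<noteq> [0,1] \<and> w \<noteq> [1,0]" using False by auto
    ultimately show ?thesis by (simp add: Bf Bf2)
  next
    case True
    show ?thesis
    proof (cases "1 \<in> set w")
      case False
      then have "set w \<subseteq> {0}" using True by auto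
      then obtain d where wd: "w = replicate d 0" using set0_rep by metis
      have "f w = 0"
      proof (cases d)
        case 0 then show ?thesis using lie_nil[OF L] wd by simp
      next
        case (Suc m) then show ?thesis using K_zero[OF Z, of d] wd by simp
      qed
      moreover have "w \<noteq> [0,1] \<and> w \<noteq> [1,0]" using False by auto
      ultimately show ?thesis by (simp add: Bf Bf2)
    next
      case one: True
      show ?thesis
      proof (cases "0 \<in> set w")
        case False
        then have "set w \<subseteq> {1}" using True by auto
        then obtain d where wd: "w = replicate d 1" using set1_rep by metis
        have "d \<noteq> 0" using one wd by auto
        then have "f w = 0" using K_zero[OF Z, of d] wd by simp
        moreover have "w \<noteq> [0,1] \<and> w \<noteq> [1,0]" using False by auto
        ultimately show ?thesis by (simp add: Bf Bf2)
      next
        case zero: True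
        have "length w \<noteq> 0" using zero by auto
        moreover have "length w \<noteq> 1"
        proof
          assume "length w = 1"
          then obtain a where "w = [a]" by (metis One_nat_def length_0_conv length_Suc_conv)
          then show False using zero one by auto
        qed
        ultimately consider "length w = 2" | "3 \<le> length w" by linarith
        then show ?thesis
        proof cases
          case 1
          then obtain a b where w: "w = [a,b]"
            by (metis (no_types, lifting) length_0_conv length_Suc_conv numeral_2_eq_2)
          have ab: "w = [0,1] \<or> w = [1,0]" using w True zero one by auto
          have "cs f [0,1] = 0" using lie_cs[OF L] by simp
          then have "f [0,1] + f [1,0] = 0" by (simp add: cs_def numeral_2_eq_2)
          then have h: "f [1,0] = - f [0,1]" by (simp add: add_eq_0_iff)
          then show ?thesis using ab by (auto simp: Bf Bf2)
        next
          case 2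
          let ?d = "length w"
          let ?e = "ev ?d 0"
          have e0: "0 \<in> set ?e" using 2 by (intro ev_0[of 0 _ 1]) auto
          have e1: "1 \<in> set ?e" using 2 by (intro ev_1) auto
          have "cs f ?e = (\<Sum>i<?d. f ?e)" unfolding cs_def
          proof (rule sum.cong)
            fix i
            have "f (rotate i ?e) = f (ev (length (rotate i ?e)) 0)"
              by (rule NC[OF Z]) (use ev_set[of ?d 0] e0 e1 2 in auto)
            then show "f (rotate i ?e) = f ?e" by simp
          qed simp
          moreover have "cs f ?e = 0" using lie_cs[OF L] 2 by simp
          ultimately have "of_nat ?d * f ?e = 0" by simp
          then have "f ?e = 0" using 2 by (metis mult_eq_0_iff of_nat_0_eq_iff not_numeral_le_zero le_0_eq)
          moreover have "f w = f ?e" by (rule NC[OF Z True zero one 2])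
          moreover have "w \<noteq> [0,1] \<and> w \<noteq> [1,0]" using 2 by auto
          ultimately show ?thesis by (simp add: Bf Bf2)
        qed
      qed
    qed
  qed
qed

lemma ball_map: "(\<forall>l\<in>set (map q w). P l) = (\<forall>l\<in>set w. P (q l))" by simp

lemma D1G:
  assumes G: "\<And>v. G v = (if \<forall>l\<in>set v. l = 0 then H (length v) else 0)"
  shows "D 1 G v = H (length v) * ((if \<forall>l\<in>set v. l = 1 then 1 else 0) - (if \<forall>l\<in>set v. l \<le> 1 then 1 else 0)
     + (if \<forall>l\<in>set v. l = 0 then 1 else 0))"
  unfolding D1 G ball_map length_map
  by (cases "\<forall>l\<in>set v. l = 1"; cases "\<forall>l\<in>set v. l \<le> 1"; cases "\<forall>l\<in>set v. l = 0") (auto simp: algebra_simps)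

lemma ALL3: "set w \<subseteq> {0,1,2} \<Longrightarrow> (\<forall>l\<in>set w. P l) = ((0 \<in> set w \<longrightarrow> P 0) \<and> (1 \<in> set w \<longrightarrow> P 1) \<and> (2 \<in> set w \<longrightarrow> P (2::nat)))"
  by auto

lemma DD0:
  fixes H :: "nat \<Rightarrow> 'k::field"
  assumes K: "\<And>v. K v = H (length v) * ((if \<forall>l\<in>set v. l = 1 then 1 else 0) - (if \<forall>l\<in>set v. l \<le> 1 then 1 else 0)
     + (if \<forall>l\<in>set v. l = 0 then 1 else 0))"
  shows "D 2 K w = 0"
proof (cases "set w \<subseteq> {0,1,2}")
  case False
  then obtain x where x0: "x \<in> set w" "x \<notin> {0,1,2}" by blast
  then have x: "x \<in> set w" "x > 2" by auto
  have c1: "\<not> (\<forall>l\<in>set w. 1 \<le> l \<and> l \<le> 2)" using x by fastforce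
  have c2: "\<not> (\<forall>l\<in>set w. l \<le> 2)" using x by fastforce
  have c3: "\<not> (\<forall>l\<in>set w. l < 2)" using x by fastforce
  show ?thesis unfolding D2 if_not_P[OF c1] if_not_P[OF c2] if_not_P[OF c3] by simp
next
  case True
  note A = ALL3[OF True]
  show ?thesis unfolding D2 K ball_map length_map A
    by (cases "0 \<in> set w"; cases "1 \<in> set w"; cases "2 \<in> set w") (simp_all add: algebra_simps)
qed


lemma ass_letter: "ass n f \<Longrightarrow> l \<in> set w \<Longrightarrow> \<not> l < n \<Longrightarrow> f w = 0"
  by (auto simp: ass_def)

lemma cs_ass0:
  assumes "ass n f" "l \<in> set w" "\<not> l < n"
  shows "cs f w = 0"
  unfolding cs_def by (rule sum.neutral) (use assms in \<open>auto intro: ass_letter\<close>)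

lemma part4b:
  fixes f g :: "'k::field_char_0 ser"
  assumes AP: "ass_pos 2 f" and G: "ass_pos 1 g" and CC: "comm_closed 2 (ssub f (delta 1 g))"
  shows "comm_closed 3 (delta 2 f)"
proof (rule cs_criterion)
  show "ass 3 (delta 2 f)" unfolding ass_def
  proof (intro allI impI)
    fix w :: "nat list" assume "\<not> set w \<subseteq> {..<3}"
    then obtain x where x0: "x \<in> set w" "x \<notin> {..<3}" by blast
    then have x: "x \<in> set w" "x \<ge> 3" by auto
    have c1: "\<not> (\<forall>l\<in>set w. 1 \<le> l \<and> l \<le> 2)" using x by fastforce
    have c2: "\<not> (\<forall>l\<in>set w. l \<le> 2)" using x by fastforce
    have c3: "\<not> (\<forall>l\<in>set w. l < 2)" using x by fastforce
    show "delta 2 f w = 0" unfolding delta_D D2 if_not_P[OF c1] if_not_P[OF c2] if_not_P[OF c3] by simp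
  qed
  show "delta 2 f [] = 0" unfolding delta_D D2 by simp
  define H where "H d = of_nat d * g (replicate d 0)" for d
  have csg: "cs g v = (if \<forall>l\<in>set v. l = 0 then H (length v) else 0)" for v
  proof (cases "\<forall>l\<in>set v. l = 0")
    case True
    then have "set v \<subseteq> {0}" by auto
    then obtain d where v: "v = replicate d 0" using set0_rep by metis
    show ?thesis using True by (simp add: v cs_rep H_def)
  next
    case False
    then obtain l where "l \<in> set v" "\<not> l < 1" by auto
    then have "cs g v = 0" using G by (intro cs_ass0[of 1 g]) (auto simp: ass_pos_def)
    then show ?thesis using False by (simp only: if_not_P if_False)
  qed
  have csf: "cs f = D 1 (cs g)"
  proof
    fix v
    have "cs (ssub f (delta 1 g)) v = 0" using comm_closed_cs[OF CC] by blast
    then show "cs f v = D 1 (cs g) v" by (simp add: cs_ssub delta_D cs_D)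
  qed
  show "\<forall>w. cs (delta 2 f) w = 0"
  proof
    fix w
    have "cs (delta 2 f) w = D 2 (D 1 (cs g)) w" by (simp add: delta_D cs_D csf)
    also have "\<dots> = 0" by (rule DD0) (rule D1G, rule csg)
    finally show "cs (delta 2 f) w = 0" .
  qed
qed


lemma part4a:
  fixes f :: "'k::field_char_0 ser"
  assumes AP: "ass_pos 2 f" and CC: "comm_closed 3 (delta 2 f)"
  shows "\<exists>g. ass_pos 1 g \<and> comm_closed 2 (ssub f (delta 1 g))"
proof -
  let ?F = "cs f"
  have Z: "\<forall>w. D 2 ?F w = 0"
  proof
    fix w
    have "cs (delta 2 f) w = 0" using comm_closed_cs[OF CC] by blast
    then show "D 2 ?F w = 0" by (simp add: delta_D cs_D)
  qed
  have NC: "?F u = ?F (ev (length u) 0)" if u: "set u \<subseteq> {0,1}" "0 \<in> set u" "1 \<in> set u" for u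
  proof -
    let ?d = "length u"
    obtain t where t: "t < ?d" "u ! t = 1" using u(3) by (auto simp: in_set_conv_nth)
    have e1: "?F (ev ?d t) = ?F u"
      by (rule K_rel[OF Z ev_set u(1)]) (use t u ev_le[OF u(1) t] ev_1[OF t(1)] in auto)
    have "?F (ev ?d t) = ?F (rotate t (ev ?d t))" by (simp add: cs_rotate)
    also have "\<dots> = ?F (ev ?d 0)" using t by (simp add: ev_rotate)
    finally show ?thesis using e1 by simp
  qed
  define g :: "'k ser" where "g w = (if (\<forall>l\<in>set w. l = 0) \<and> w \<noteq> [] then - ?F (ev (length w) 0) / of_nat (length w) else 0)" for w
  define H where "H d = (if d = 0 then 0 else - ?F (ev d 0))" for d
  have APg: "ass_pos 1 g" unfolding ass_pos_def ass_def g_def by auto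
  have csg: "cs g v = (if \<forall>l\<in>set v. l = 0 then H (length v) else 0)" for v
  proof (cases "\<forall>l\<in>set v. l = 0")
    case True
    then have "set v \<subseteq> {0}" by auto
    then obtain d where v: "v = replicate d 0" using set0_rep by metis
    show ?thesis
    proof (cases d)
      case 0 then show ?thesis by (simp add: v cs_def H_def)
    next
      case (Suc m)
      have "cs g v = of_nat d * g (replicate d 0)" by (simp add: v cs_rep)
      also have "\<dots> = H d"
      proof -
        have nz: "of_nat d \<noteq> (0::'k)" using Suc by (simp del: of_nat_Suc)
        have "(\<forall>l\<in>set (replicate d (0::nat)). l = 0) \<and> replicate d (0::nat) \<noteq> []" using Suc by simp
        then have "g (replicate d 0) = - ?F (ev d 0) / of_nat d" by (simp add: g_def)
        then show ?thesis using nz Suc by (simp add: H_def)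
      qed
      finally show ?thesis using True v by simp
    qed
  next
    case False
    then obtain l where "l \<in> set v" "\<not> l < 1" by auto
    then have "cs g v = 0" using APg by (intro cs_ass0[of 1 g]) (auto simp: ass_pos_def)
    then show ?thesis using False by (simp only: if_not_P if_False)
  qed
  have Dg: "D 1 (cs g) u = H (length u) * ((if \<forall>l\<in>set u. l = 1 then 1 else 0) - (if \<forall>l\<in>set u. l \<le> 1 then 1 else 0)
     + (if \<forall>l\<in>set u. l = 0 then 1 else 0))" for u
    by (rule D1G, rule csg)
  have "comm_closed 2 (ssub f (delta 1 g))"
  proof (rule cs_criterion)
    show "ass 2 (ssub f (delta 1 g))" unfolding ass_def
    proof (intro allI impI)
      fix w :: "nat list" assume "\<not> set w \<subseteq> {..<2}"
      then obtain x where x0: "x \<in> set w" "x \<notin> {..<2}" by blast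
      then have x: "x \<in> set w" "x \<ge> 2" by auto
      have c1: "\<not> (\<forall>l\<in>set w. l = 1)" using x by fastforce
      have c2: "\<not> (\<forall>l\<in>set w. l \<le> 1)" using x by fastforce
      have c3: "\<not> (\<forall>l\<in>set w. l = 0)" using x by fastforce
      have "f w = 0" using AP x by (intro ass_letter[of 2 f x]) (auto simp: ass_pos_def)
      then show "ssub f (delta 1 g) w = 0"
        unfolding ssub_def delta_D D1 if_not_P[OF c1] if_not_P[OF c2] if_not_P[OF c3] by simp
    qed
    show "ssub f (delta 1 g) [] = 0" using AP unfolding ssub_def delta_D D1
      by (simp add: ass_pos_def g_def)
    show "\<forall>u. cs (ssub f (delta 1 g)) u = 0"
    proof
      fix u
      have e: "cs (ssub f (delta 1 g)) u = ?F u - D 1 (cs g) u" by (simp add: cs_ssub delta_D cs_D)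
      show "cs (ssub f (delta 1 g)) u = 0"
      proof (cases "set u \<subseteq> {0,1}")
        case False
        then obtain x where x0: "x \<in> set u" "x \<notin> {0,1}" by blast
        then have x: "x \<in> set u" "x \<ge> 2" by auto
        have c1: "\<not> (\<forall>l\<in>set u. l = 1)" using x by fastforce
        have c2: "\<not> (\<forall>l\<in>set u. l \<le> 1)" using x by fastforce
        have c3: "\<not> (\<forall>l\<in>set u. l = 0)" using x by fastforce
        have "?F u = 0" using AP x by (intro cs_ass0[of 2 f x u]) (auto simp: ass_pos_def)
        then show ?thesis unfolding e Dg if_not_P[OF c1] if_not_P[OF c2] if_not_P[OF c3] by simp
      next
        case True
        show ?thesis
        proof (cases "u = []")
          case True then show ?thesis unfolding e Dg by (simp add: cs_def H_def)
        next
          case ne: False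
          have dpos: "length u \<noteq> 0" using ne by simp
          show ?thesis
          proof (cases "1 \<in> set u")
            case False
            then have "set u \<subseteq> {0}" using True by auto
            then obtain d where ud: "u = replicate d 0" using set0_rep by metis
            have d0: "0 < d" using ne ud by auto
            have Fz: "?F u = 0" using K_zero(1)[OF Z d0] ud by simp
            have a: "\<forall>l\<in>set u. l = 0" "\<forall>l\<in>set u. l \<le> 1" "\<not> (\<forall>l\<in>set u. l = 1)"
              using ud d0 by auto
            show ?thesis unfolding e Dg if_P[OF a(1)] if_P[OF a(2)] if_not_P[OF a(3)] using Fz by simp
          next
            case one: True
            show ?thesis
            proof (cases "0 \<in> set u")
              case False
              then have "set u \<subseteq> {1}" using True by auto
              then obtain d where ud: "u = replicate d 1" using set1_rep by metis
              have d0: "0 < d" using ne ud by auto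
              have Fz: "?F u = 0" using K_zero(2)[OF Z d0] ud by simp
              have a: "\<not> (\<forall>l\<in>set u. l = 0)" "\<forall>l\<in>set u. l \<le> 1" "\<forall>l\<in>set u. l = 1"
                using ud d0 by auto
              show ?thesis unfolding e Dg if_not_P[OF a(1)] if_P[OF a(2)] if_P[OF a(3)] using Fz by simp
            next
              case zero: True
              have c1: "\<not> (\<forall>l\<in>set u. l = 1)" using zero by (metis zero_neq_one)
              have c2: "\<forall>l\<in>set u. l \<le> 1" using True by auto
              have c3: "\<not> (\<forall>l\<in>set u. l = 0)" using one by (metis zero_neq_one)
              have "?F u = ?F (ev (length u) 0)" by (rule NC[OF True zero one])
              then show ?thesis unfolding e Dg if_not_P[OF c1] if_P[OF c2] if_not_P[OF c3]
                using dpos by (simp add: H_def)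
            qed
          qed
        qed
      qed
    qed
  qed
  then show ?thesis using APg by blast
qed

lemma lie1_szero: "lie 1 (szero :: 'k::field ser)"
  unfolding lie_def
proof (intro conjI allI)
  show "ass 1 (szero :: 'k ser)" by (simp add: ass_def szero_def)
  fix d
  have "hom d (szero :: 'k ser) = szero" by (rule ext) (simp add: hom_def szero_def)
  then show "hom d (szero :: 'k ser) \<in> lie_poly 1" by (simp add: lie_poly.lp_zero)
qed

lemma delta1_szero: "delta 1 (szero :: 'k::field ser) = szero"
  by (rule delta1_gen[of _ 0]) (simp add: szero_def)

theorem theorem2p7:
  fixes dummy :: "'k::field_char_0"
  shows
   "(\<forall>f::'k ser. lie 1 f \<longrightarrow> delta 1 f = szero)
  \<and> (\<forall>f::'k ser. ass_pos 1 f \<longrightarrow>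
        (comm_closed 2 (delta 1 f) \<longleftrightarrow>
         (\<exists>c. comm_closed 1 (ssub f (ssmult c (gen 0))))))
  \<and> (lie 2 (sbracket (gen 0) (gen 1) :: 'k ser)
     \<and> delta 2 (sbracket (gen 0) (gen 1) :: 'k ser) = szero
     \<and> (\<nexists>g::'k ser. lie 1 g \<and> delta 1 g = sbracket (gen 0) (gen 1))
     \<and> (\<forall>f::'k ser. lie 2 f \<longrightarrow> delta 2 f = szero \<longrightarrow>
          (\<exists>c g. lie 1 g \<and> f = sadd (ssmult c (sbracket (gen 0) (gen 1))) (delta 1 g))))
  \<and> (\<forall>f::'k ser. ass_pos 2 f \<longrightarrow>
        (comm_closed 3 (delta 2 f) \<longleftrightarrow>
         (\<exists>g. ass_pos 1 g \<and> comm_closed 2 (ssub f (delta 1 g)))))"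
proof (intro conjI allI impI)
  fix f :: "'k ser"
  assume "lie 1 f" then show "delta 1 f = szero" by (rule part1)
next
  fix f :: "'k ser"
  assume "ass_pos 1 f"
  then show "comm_closed 2 (delta 1 f) \<longleftrightarrow> (\<exists>c. comm_closed 1 (ssub f (ssmult c (gen 0))))"
    by (rule part2)
next
  show "lie 2 (sbracket (gen 0) (gen 1) :: 'k ser)" by (rule part3a)
next
  show "delta 2 (sbracket (gen 0) (gen 1) :: 'k ser) = szero" by (rule part3b)
next
  show "\<nexists>g::'k ser. lie 1 g \<and> delta 1 g = sbracket (gen 0) (gen 1)" by (rule part3c)
next
  fix f :: "'k ser"
  assume L: "lie 2 f" and Z: "delta 2 f = szero"
  have "f = sadd (ssmult (f [0,1]) (sbracket (gen 0) (gen 1))) (delta 1 szero)"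
  proof
    fix w
    show "f w = sadd (ssmult (f [0,1]) (sbracket (gen 0) (gen 1))) (delta 1 szero) w"
      using part3d_pw[OF L Z, of w] unfolding delta1_szero by (simp add: sadd_def ssmult_def szero_def)
  qed
  then show "\<exists>c g. lie 1 g \<and> f = sadd (ssmult c (sbracket (gen 0) (gen 1))) (delta 1 g)"
    using lie1_szero by blast
next
  fix f :: "'k ser"
  assume AP: "ass_pos 2 f"
  show "comm_closed 3 (delta 2 f) \<longleftrightarrow> (\<exists>g. ass_pos 1 g \<and> comm_closed 2 (ssub f (delta 1 g)))"
  proof
    assume "comm_closed 3 (delta 2 f)"
    then show "\<exists>g. ass_pos 1 g \<and> comm_closed 2 (ssub f (delta 1 g))" by (rule part4a[OF AP])
  next
    assume "\<exists>g. ass_pos 1 g \<and> comm_closed 2 (ssub f (delta 1 g))"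
    then obtain g where "ass_pos 1 g" "comm_closed 2 (ssub f (delta 1 g))" by blast
    then show "comm_closed 3 (delta 2 f)" by (rule part4b[OF AP])
  qed
qed

end
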